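(* Let $n\in[0,\frac72]$, $\varepsilon>0$ and $h_\varepsilon(s):=\frac{s^{5-n}}{s^{4-n}+\varepsilon}$ for $s\ge0$. Then $$0\le h_\varepsilon(s)\le s\quad\text{and}\quad0\le h_\varepsilon'(s)\le5-n\qquad\text{for all }s\ge0,$$ and moreover $$|h_\varepsilon''(s)|\le2^{-\frac{7-2n}{2(4-n)}}(4-n)(5-n)\,\varepsilon^{\frac{1}{2(4-n)}}s^{-3/2}\qquad\text{for all }s>0.$$ *)

theory Defs
  imports "HOL-Analysis.Analysis"
begin

definition h_eps :: "real \<Rightarrow> real \<Rightarrow> real \<Rightarrow> real" where
  "h_eps n \<epsilon> s = s powr (5 - n) / (s powr (4 - n) + \<epsilon>)"

end

theory Submission
  imports Defs
begin


definition G :: "real \<Rightarrow> real \<Rightarrow> real \<Rightarrow> real" where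
  "G a e s = ((s powr a)^2 + (a+1)*e*(s powr a)) / (s powr a + e)^2"

definition F :: "real \<Rightarrow> real \<Rightarrow> real \<Rightarrow> real" where
  "F a e u = (u^2 + (a+1)*e*u) / (u + e)^2"

lemma d1:
  fixes a e s :: real
  assumes "a > 0" "e > 0" "s > 0"
  shows "((\<lambda>s. s powr (a+1) / (s powr a + e)) has_real_derivative G a e s) (at s)"
proof -
  have u: "s powr a > 0" using assms by simp
  have D: "((\<lambda>s. s powr (a+1) / (s powr a + e)) has_real_derivative
     (((a+1) * s powr (a+1-1)) * (s powr a + e) - s powr (a+1) * (a * s powr (a-1) + 0)) / ((s powr a + e)*(s powr a + e))) (at s)"
    apply (rule DERIV_divide)
      apply (rule has_real_derivative_powr[OF assms(3)])
     apply (rule DERIV_add[OF has_real_derivative_powr[OF assms(3)] DERIV_const])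
    using u assms by linarith
  have e1: "s powr (a+1) = s powr a * s" using assms by (simp add: powr_add)
  have e2: "s powr (a-1) = s powr a / s" using assms by (simp add: powr_diff)
  have "(((a+1) * s powr (a+1-1)) * (s powr a + e) - s powr (a+1) * (a * s powr (a-1) + 0)) / ((s powr a + e)*(s powr a + e))
        = G a e s"
    unfolding G_def e1 e2 using assms by (simp add: field_simps power2_eq_square)
  with D show ?thesis by simp
qed

lemma dF:
  fixes a e u :: real
  assumes "e > 0" "u > 0"
  shows "(F a e has_real_derivative e*((1-a)*u + (a+1)*e)/(u+e)^3) (at u)"
proof -
  have D: "(F a e has_real_derivative ((2*u^1*1 + (a+1)*e*1) * (u+e)^2 - (u^2 + (a+1)*e*u) * (2*(u+e)^1*(1+0))) / ((u+e)^2)^2) (at u)"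
    unfolding F_def
    apply (rule derivative_eq_intros refl)+
    using assms by auto
  have "((2*u^1*1 + (a+1)*e*1) * (u+e)^2 - (u^2 + (a+1)*e*u) * (2*(u+e)^1*(1+0)))
     = (e*((1-a)*u + (a+1)*e)) * (u+e)"
    by (simp add: algebra_simps power2_eq_square)
  moreover have "((u+e)^2)^2 = (u+e)^3 * (u+e)" by algebra
  ultimately have "((2*u^1*1 + (a+1)*e*1) * (u+e)^2 - (u^2 + (a+1)*e*u) * (2*(u+e)^1*(1+0))) / ((u+e)^2)^2
     = e*((1-a)*u + (a+1)*e)/(u+e)^3"
    using assms by simp
  with D show ?thesis by simp
qed

lemma keyineq:
  fixes u e p :: real
  assumes "u > 0" "e > 0" "1 \<le> p" "p \<le> 2"
  shows "e * u powr p \<le> 2 powr (p-2) * e powr (p-1) * (u+e)^2"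
proof -
  define t where "t = u + e"
  define w where "w = u / t"
  define q where "q = e / t"
  have t: "t > 0" using assms by (simp add: t_def)
  have w: "0 < w" "w \<le> 1" using assms t by (auto simp: w_def t_def)
  have q: "0 < q" "q \<le> 1" using assms t by (auto simp: q_def t_def)
  have uw: "u = w * t" and eq: "e = q * t" using t by (auto simp: w_def q_def)
  have wq: "w * q \<le> 1/4"
  proof -
    have "w + q = (u + e) / t" by (simp add: w_def q_def add_divide_distrib)
    also have "\<dots> = 1" using t by (simp add: t_def)
    finally have qw: "q = 1 - w" by simp
    have "w*q = 1/4 - (w-1/2)^2" unfolding qw by (simp add: power2_eq_square algebra_simps)
    thus ?thesis using zero_le_power2[of "w-1/2"] by linarith
  qed
  have A: "w powr (2*p-2) \<le> 1" using w assms by (intro powr_le1) auto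
  have B: "(w*q) powr (2-p) \<le> (1/4) powr (2-p)" using w q wq assms by (intro powr_mono2) auto
  have C: "(1/4::real) powr (2-p) = 2 powr (2*p-4)"
  proof -
    have h: "(1/4::real) = 2 powr (-2)" by (simp add: powr_minus)
    have "(1/4::real) powr (2-p) = 2 powr (-2*(2-p))" by (subst h) (rule powr_powr)
    thus ?thesis by (simp add: algebra_simps)
  qed
  have Dd: "(2::real) powr (2*p-4) \<le> 2 powr (p-2)" using assms by (intro powr_mono) auto
  have wp: "w powr p * q powr (2-p) = w powr (2*p-2) * (w*q) powr (2-p)"
    using w q by (simp add: powr_mult powr_add[symmetric])
  have key: "w powr p * q powr (2-p) \<le> 2 powr (p-2)"
  proof -
    have "w powr (2*p-2) * (w*q) powr (2-p) \<le> 1 * (w*q) powr (2-p)"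
      using A by (intro mult_right_mono) auto
    also have "\<dots> \<le> 2 powr (p-2)" using B C Dd by linarith
    finally show ?thesis using wp by simp
  qed
  have "e * u powr p = (w powr p * q powr (2-p)) * (q powr (p-1) * t powr (p+1))"
  proof -
    have Q1: "q powr (2-p) * q powr (p-1) = q" using q by (simp add: powr_add[symmetric])
    have T1: "t powr (p+1) = t * t powr p" using t by (simp add: powr_add)
    have "(w powr p * q powr (2-p)) * (q powr (p-1) * t powr (p+1))
        = w powr p * (q powr (2-p) * q powr (p-1)) * t powr (p+1)" by (simp only: mult_ac)
    also have "\<dots> = w powr p * q * (t * t powr p)" by (simp only: Q1 T1)
    also have "\<dots> = e * u powr p" unfolding uw eq using w t by (simp add: powr_mult mult_ac)
    finally show ?thesis by simp
  qed
  also have "\<dots> \<le> 2 powr (p-2) * (q powr (p-1) * t powr (p+1))"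
    using key q t by (intro mult_right_mono) auto
  also have "q powr (p-1) * t powr (p+1) = e powr (p-1) * (u+e)^2"
  proof -
    have "t powr (p+1) = t powr ((p-1)+2)" by (simp add: add.commute)
    also have "\<dots> = t powr (p-1) * t powr 2" by (rule powr_add)
    also have "t powr 2 = t^2" using t by simp
    finally have "t powr (p+1) = t powr (p-1) * t^2" .
    moreover have "e powr (p-1) = q powr (p-1) * t powr (p-1)" unfolding eq by (rule powr_mult)
    ultimately show ?thesis by (simp add: t_def[symmetric] mult_ac)
  qed
  finally show ?thesis by (simp add: mult.assoc)
qed


lemma G_bounds:
  fixes a e s :: real
  assumes "a > 0" "e > 0" "s > 0"
  shows "0 \<le> G a e s \<and> G a e s \<le> a + 1"
proof -
  define u where "u = s powr a"
  have u: "u > 0" using assms by (simp add: u_def)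
  have G: "G a e s = (u^2 + (a+1)*e*u) / (u+e)^2" by (simp add: G_def u_def)
  have p: "(u+e)^2 > 0" using u assms by simp
  have "u^2 + (a+1)*e*u \<le> (a+1) * (u+e)^2"
  proof -
    have "(a+1) * (u+e)^2 - (u^2 + (a+1)*e*u) = a*u^2 + (a+1)*e*u + (a+1)*e^2"
      by (simp add: power2_eq_square algebra_simps)
    moreover have "a*u^2 + (a+1)*e*u + (a+1)*e^2 \<ge> 0" using assms u by simp
    ultimately show ?thesis by linarith
  qed
  hence "G a e s \<le> a + 1" unfolding G using p by (simp add: divide_le_eq)
  moreover have "0 \<le> G a e s" unfolding G using u assms by simp
  ultimately show ?thesis by simp
qed

lemma deriv_zero:
  fixes a e :: real
  assumes "a > 0" "e > 0"
  shows "((\<lambda>s. s powr (a+1) / (s powr a + e)) has_real_derivative 0) (at 0 within {0..})"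
proof -
  have ev: "eventually (\<lambda>y::real. y \<ge> 0) (at 0 within {0..})"
    by (simp add: eventually_at_filter)
  have l1: "((\<lambda>y::real. y powr a) \<longlongrightarrow> 0 powr a) (at 0 within {0..})"
    by (rule tendsto_powr'[OF tendsto_ident_at tendsto_const]) (use assms ev in auto)
  have l2: "((\<lambda>y::real. y powr a / (y powr a + e)) \<longlongrightarrow> 0 powr a / (0 powr a + e)) (at 0 within {0..})"
    by (intro tendsto_divide tendsto_add l1 tendsto_const) (use assms in auto)
  have l3: "((\<lambda>y::real. y powr a / (y powr a + e)) \<longlongrightarrow> 0) (at 0 within {0..})"
    using l2 by simp
  have ev2: "eventually (\<lambda>y::real. y powr a / (y powr a + e) =
      (y powr (a+1) / (y powr a + e) - 0 powr (a+1) / (0 powr a + e)) / (y - 0)) (at 0 within {0..})"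
  proof -
    have "y powr a / (y powr a + e) =
      (y powr (a+1) / (y powr a + e) - 0 powr (a+1) / (0 powr a + e)) / (y - 0)"
      if "y \<noteq> 0" "y \<in> {0..}" for y :: real
    proof -
      have y: "y > 0" using that by auto
      have "y powr (a+1) = y powr a * y" using y by (simp add: powr_add)
      thus ?thesis using y by simp
    qed
    thus ?thesis by (simp add: eventually_at_filter)
  qed
  show ?thesis
    unfolding has_field_derivative_iff
    by (rule Lim_transform_eventually[OF l3 ev2])
qed

lemma D2_bound:
  fixes a e s :: real
  assumes a: "a \<ge> 1/2" and e: "e > 0" and s: "s > 0"
  shows "\<bar>e*((1-a)*(s powr a) + (a+1)*e)/((s powr a)+e)^3 * (a * s powr (a-1))\<bar>
     \<le> 2 powr (-(2*a-1)/(2*a)) * a * (a+1) * e powr (1/(2*a)) * s powr (-3/2)"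
proof -
  define u where "u = s powr a"
  have u: "u > 0" using s by (simp add: u_def)
  have ue: "u + e > 0" using u e by simp
  define p where "p = 1 + 1/(2*a)"
  have p1: "1 \<le> p" and p2: "p \<le> 2" using a by (auto simp: p_def field_simps)
  have abs1: "\<bar>(1-a)*u + (a+1)*e\<bar> \<le> (a+1)*(u+e)"
  proof -
    have "a*u \<ge> 0" "a*e \<ge> 0" using a u e by auto
    thus ?thesis using u e by (simp add: abs_le_iff algebra_simps)
  qed
  have L: "\<bar>e*((1-a)*u + (a+1)*e)/(u+e)^3 * (a * s powr (a-1))\<bar>
      = e * \<bar>(1-a)*u + (a+1)*e\<bar> / (u+e)^3 * (a * s powr (a-1))"
    using e ue a s by (simp add: abs_mult)
  also have "\<dots> \<le> e * ((a+1)*(u+e)) / (u+e)^3 * (a * s powr (a-1))"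
    using abs1 e ue a s by (intro mult_right_mono divide_right_mono mult_left_mono) auto
  also have "\<dots> = a * (a+1) * (e * s powr (a-1) / (u+e)^2)"
  proof -
    have "(u+e)^3 = (u+e)^2*(u+e)" by (simp add: power2_eq_square power3_eq_cube)
    hence "e * ((a+1)*(u+e)) / (u+e)^3 = e * (a+1) / (u+e)^2" using ue by simp
    thus ?thesis by simp
  qed
  also have "e * s powr (a-1) / (u+e)^2 \<le> 2 powr (p-2) * e powr (p-1) * s powr (-3/2)"
  proof -
    have up: "u powr p = s powr (a + 1/2)"
      unfolding u_def p_def using a by (simp add: powr_powr algebra_simps)
    have sa: "s powr (a-1) = s powr (a + 1/2) * s powr (-3/2)"
      by (simp add: powr_add[symmetric])
    have K: "e * u powr p \<le> 2 powr (p-2) * e powr (p-1) * (u+e)^2"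
      by (rule keyineq[OF u e p1 p2])
    have "e * s powr (a-1) / (u+e)^2 = (e * u powr p) / (u+e)^2 * s powr (-3/2)"
      unfolding sa up by simp
    also have "\<dots> \<le> (2 powr (p-2) * e powr (p-1) * (u+e)^2) / (u+e)^2 * s powr (-3/2)"
      using K ue by (intro mult_right_mono divide_right_mono) auto
    also have "\<dots> = 2 powr (p-2) * e powr (p-1) * s powr (-3/2)" using ue by simp
    finally show ?thesis .
  qed
  hence "a * (a+1) * (e * s powr (a-1) / (u+e)^2) \<le> a * (a+1) * (2 powr (p-2) * e powr (p-1) * s powr (-3/2))"
    using a by (intro mult_left_mono) auto
  finally have fin: "\<bar>e * ((1 - a) * u + (a + 1) * e) / (u + e) ^ 3 * (a * s powr (a - 1))\<bar>
     \<le> a * (a + 1) * (2 powr (p - 2) * e powr (p - 1) * s powr (- 3 / 2))" .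
  have "p - 2 = -(2*a-1)/(2*a)" "p - 1 = 1/(2*a)" using a by (auto simp: p_def field_simps)
  with fin show ?thesis unfolding u_def by (simp add: mult_ac)
qed

theorem lemma6p1:
  fixes n \<epsilon> :: real
  assumes "0 \<le> n" and "n \<le> 7/2" and "\<epsilon> > 0"
  shows "(\<forall>s\<ge>0. 0 \<le> h_eps n \<epsilon> s \<and> h_eps n \<epsilon> s \<le> s)
       \<and> (\<forall>s\<ge>0. \<exists>D. (h_eps n \<epsilon> has_real_derivative D) (at s within {0..})
                      \<and> 0 \<le> D \<and> D \<le> 5 - n)
       \<and> (\<forall>s>0. \<exists>D2. (deriv (h_eps n \<epsilon>) has_real_derivative D2) (at s)
                      \<and> \<bar>D2\<bar> \<le> 2 powr (- (7 - 2*n) / (2 * (4 - n))) * (4 - n) * (5 - n)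
                               * \<epsilon> powr (1 / (2 * (4 - n))) * s powr (- 3/2))"
proof -
  define a where "a = 4 - n"
  have a: "a \<ge> 1/2" "a > 0" using assms by (auto simp: a_def)
  have e: "\<epsilon> > 0" by fact
  have n5: "5 - n = a + 1" and n7: "7 - 2*n = 2*a - 1" and n4: "4 - n = a" by (auto simp: a_def)
  have H: "h_eps n \<epsilon> = (\<lambda>s. s powr (a+1) / (s powr a + \<epsilon>))"
    by (rule ext) (simp add: h_eps_def n5 n4)
  have P1: "0 \<le> h_eps n \<epsilon> s \<and> h_eps n \<epsilon> s \<le> s" if s: "s \<ge> 0" for s
  proof (cases "s = 0")
    case True thus ?thesis by (simp add: H)
  next
    case False
    hence s: "s > 0" using s by simp
    have u: "s powr a > 0" using s by simp
    have "s powr (a+1) = s powr a * s" using s by (simp add: powr_add)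
    hence h: "h_eps n \<epsilon> s = s powr a * s / (s powr a + \<epsilon>)" by (simp add: H)
    have "s powr a * s \<le> s * (s powr a + \<epsilon>)" using s e by (simp add: algebra_simps)
    moreover have d: "s powr a + \<epsilon> > 0" using u e by linarith
    ultimately have "s powr a * s / (s powr a + \<epsilon>) \<le> s" by (simp only: pos_divide_le_eq[OF d])
    moreover have "0 \<le> s powr a * s / (s powr a + \<epsilon>)" using u s e by simp
    ultimately show ?thesis using h by simp
  qed
  have P2: "\<exists>D. (h_eps n \<epsilon> has_real_derivative D) (at s within {0..}) \<and> 0 \<le> D \<and> D \<le> 5 - n"
    if s: "s \<ge> 0" for s
  proof (cases "s = 0")
    case True
    show ?thesis using deriv_zero[OF a(2) e] True a by (auto simp: H n5)
  next
    case False
    hence s: "s > 0" using s by simp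
    show ?thesis using d1[OF a(2) e s] G_bounds[OF a(2) e s]
      by (auto simp: H n5 intro!: has_field_derivative_at_within)
  qed
  have P3: "\<exists>D2. (deriv (h_eps n \<epsilon>) has_real_derivative D2) (at s)
                      \<and> \<bar>D2\<bar> \<le> 2 powr (- (7 - 2*n) / (2 * (4 - n))) * (4 - n) * (5 - n)
                               * \<epsilon> powr (1 / (2 * (4 - n))) * s powr (- 3/2)"
    if s: "s > 0" for s
  proof -
    have dG: "(G a \<epsilon> has_real_derivative
        \<epsilon>*((1-a)*(s powr a) + (a+1)*\<epsilon>)/((s powr a)+\<epsilon>)^3 * (a * s powr (a-1))) (at s)"
    proof -
      have eqG: "G a \<epsilon> = (\<lambda>x. F a \<epsilon> (x powr a))" by (rule ext) (simp add: G_def F_def)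
      show ?thesis unfolding eqG
        by (rule DERIV_chain2[OF dF[OF e] has_real_derivative_powr[OF s]]) (use s in simp)
    qed
    have "(deriv (h_eps n \<epsilon>) has_real_derivative
        \<epsilon>*((1-a)*(s powr a) + (a+1)*\<epsilon>)/((s powr a)+\<epsilon>)^3 * (a * s powr (a-1))) (at s)"
    proof (rule has_field_derivative_transform_within_open[OF dG, of "{0<..}"])
      show "open {0::real<..}" by simp
      show "s \<in> {0<..}" using s by simp
      fix y :: real assume "y \<in> {0<..}"
      hence y: "y > 0" by simp
      show "G a \<epsilon> y = deriv (h_eps n \<epsilon>) y"
        unfolding H using DERIV_imp_deriv[OF d1[OF a(2) e y]] by simp
    qed
    moreover have "\<bar>\<epsilon>*((1-a)*(s powr a) + (a+1)*\<epsilon>)/((s powr a)+\<epsilon>)^3 * (a * s powr (a-1))\<bar>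
     \<le> 2 powr (-(2*a-1)/(2*a)) * a * (a+1) * \<epsilon> powr (1/(2*a)) * s powr (-3/2)"
      by (rule D2_bound[OF a(1) e s])
    ultimately show ?thesis unfolding n5 n7 n4 by blast
  qed
  show ?thesis using P1 P2 P3 by blast
qed

end
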